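(* Let $\alpha\in(0,1)$, $0<\varepsilon\le1/4$, a spending sequence $(\varepsilon_t)_{t\ge0}$ and the stopping boundaries $U_t,L_t$ be as in the context, and suppose there exist $\lambda>0$, $q>0$, $T\in\mathbb{N}$ with $\varepsilon_t-\varepsilon_{t-1}\ge\lambda t^{-q}$ for all $t\ge T$. Let $p$ be a $[0,1]$-valued random variable with CDF $F$ that is H\"older continuous with exponent $\xi>0$ in a neighborhood of $\alpha$ (there exist an open interval $V\ni\alpha$ and $c>0$ with $|F(x)-F(y)|\le c|x-y|^\xi$ for $x,y\in V$). Conditionally on $p$, let $X_1,X_2,\dots$ be i.i.d. Bernoulli$(p)$, $S_t=\sum_{j=1}^tX_j$, and $\tau=\inf\{t\in\mathbb{N}:S_t\ge U_t\text{ or }S_t\le L_t\}$. Then for any $\eta\in(0,1)$ there exist constants $\kappa$ and $\tilde T$ such that $\mathbb{P}(\tau>t)\le 2e^{-2t^\eta}+\kappa t^{\xi(\eta-1)/2}$ for all $t\ge\tilde T$. Hence $\mathbb{P}(\tau>t)=o(t^d)$ as $t\to\infty$ for any $d>-\xi/2$.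
   Context: $\mathbb{N}=\{1,2,\dots\}$. A spending sequence is a sequence $(\varepsilon_t)_{t\ge0}$ of reals with $0\le\varepsilon_0\le\varepsilon_1\le\cdots$ and $\varepsilon_t\to\varepsilon$. For $r\in[0,1]$, $\mathbb{P}_r$ denotes a probability under which $X_1,X_2,\dots$ are i.i.d. Bernoulli$(r)$, $S_t=\sum_{j=1}^tX_j$. The stopping boundaries are defined recursively: with $\tau=\inf\{t\in\mathbb{N}:S_t\ge U_t\text{ or }S_t\le L_t\}$ ($\inf\emptyset=\infty$; the events $\{\tau\ge t\}$, $\{\tau<t,S_\tau\ge U_\tau\}$, $\{\tau<t,S_\tau\le L_\tau\}$ only involve $U_s,L_s$, $s<t$), $U_t=\min\{j\in\mathbb{N}:\mathbb{P}_\alpha(\tau\ge t,S_t\ge j)+\mathbb{P}_\alpha(\tau<t,S_\tau\ge U_\tau)\le\varepsilon_t\}$ and $L_t=\max\{j\in\mathbb{Z}:\mathbb{P}_\alpha(\tau\ge t,S_t\le j)+\mathbb{P}_\alpha(\tau<t,S_\tau\le L_\tau)\le\varepsilon_t\}$. *)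

theory Defs
  imports "HOL-Probability.Probability" "HOL-Library.Landau_Symbols"
begin

text \<open>Paths of length t of Bernoulli observations are bool lists; under P_r the
probability of a path is the product of r (for 1) and 1-r (for 0).\<close>

definition path_prob :: "real \<Rightarrow> bool list \<Rightarrow> real" where
  "path_prob r xs = (\<Prod>x\<leftarrow>xs. if x then r else 1 - r)"

text \<open>P_r of an event depending only on the first t observations.\<close>
definition Pr :: "real \<Rightarrow> nat \<Rightarrow> (bool list \<Rightarrow> bool) \<Rightarrow> real" where
  "Pr r t A = (\<Sum>xs\<in>{xs. length xs = t \<and> A xs}. path_prob r xs)"

definition Sn :: "bool list \<Rightarrow> nat \<Rightarrow> int" where
  "Sn xs s = int (length (filter id (take s xs)))"

text \<open>Boundaries are stored as B s = (U_s, L_s).\<close>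

text \<open>Event tau >= t: no stopping at times 1..t-1.\<close>
definition cont :: "(nat \<Rightarrow> int \<times> int) \<Rightarrow> bool list \<Rightarrow> nat \<Rightarrow> bool" where
  "cont B xs t \<longleftrightarrow> (\<forall>s\<in>{1..<t}. snd (B s) < Sn xs s \<and> Sn xs s < fst (B s))"

definition stop_up :: "(nat \<Rightarrow> int \<times> int) \<Rightarrow> bool list \<Rightarrow> nat \<Rightarrow> bool" where
  "stop_up B xs t \<longleftrightarrow> (\<exists>s\<in>{1..<t}. cont B xs s \<and> Sn xs s \<ge> fst (B s))"

definition stop_low :: "(nat \<Rightarrow> int \<times> int) \<Rightarrow> bool list \<Rightarrow> nat \<Rightarrow> bool" where
  "stop_low B xs t \<longleftrightarrow> (\<exists>s\<in>{1..<t}. cont B xs s \<and> Sn xs s \<le> snd (B s))"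

definition U_new :: "(nat \<Rightarrow> real) \<Rightarrow> real \<Rightarrow> (nat \<Rightarrow> int \<times> int) \<Rightarrow> nat \<Rightarrow> int" where
  "U_new e a B t = (LEAST j::int. j \<ge> 1 \<and>
     Pr a t (\<lambda>xs. cont B xs t \<and> Sn xs t \<ge> j) + Pr a t (\<lambda>xs. stop_up B xs t) \<le> e t)"

definition L_new :: "(nat \<Rightarrow> real) \<Rightarrow> real \<Rightarrow> (nat \<Rightarrow> int \<times> int) \<Rightarrow> nat \<Rightarrow> int" where
  "L_new e a B t = (GREATEST j::int.
     Pr a t (\<lambda>xs. cont B xs t \<and> Sn xs t \<le> j) + Pr a t (\<lambda>xs. stop_low B xs t) \<le> e t)"

text \<open>bnds e a t holds the correct boundaries (U_s, L_s) at all s with 1 <= s <= t.\<close>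
primrec bnds :: "(nat \<Rightarrow> real) \<Rightarrow> real \<Rightarrow> nat \<Rightarrow> (nat \<Rightarrow> int \<times> int)" where
  "bnds e a 0 = (\<lambda>_. (0, 0))"
| "bnds e a (Suc t) = (bnds e a t)(Suc t := (U_new e a (bnds e a t) (Suc t),
                                             L_new e a (bnds e a t) (Suc t)))"

definition Bnd :: "(nat \<Rightarrow> real) \<Rightarrow> real \<Rightarrow> nat \<Rightarrow> int \<times> int" where
  "Bnd e a t = bnds e a t t"

text \<open>P_r(tau > t) = P_r(no stopping at times 1..t).\<close>
definition no_stop_prob :: "(nat \<Rightarrow> real) \<Rightarrow> real \<Rightarrow> real \<Rightarrow> nat \<Rightarrow> real" where
  "no_stop_prob e a r t = Pr r t (\<lambda>xs. cont (Bnd e a) xs (Suc t))"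

end

theory Submission
  imports Defs "HOL-Real_Asymp.Real_Asymp"
begin


definition L :: "nat \<Rightarrow> bool list set" where "L t = {xs. length xs = t}"

lemma finite_L[simp]: "finite (L t)"
  unfolding L_def using finite_lists_length_eq[of "UNIV::bool set" t] by simp

lemma L_Suc: "L (Suc t) = (\<lambda>(ys,b). ys @ [b]) ` (L t \<times> UNIV)"
proof (rule set_eqI, rule iffI)
  fix xs assume "xs \<in> L (Suc t)"
  then have "xs = butlast xs @ [last xs]" "butlast xs \<in> L t"
    by (auto simp: L_def intro!: append_butlast_last_id[symmetric])
  then show "xs \<in> (\<lambda>(ys,b). ys @ [b]) ` (L t \<times> UNIV)" by (auto intro!: image_eqI[of _ _ "(butlast xs, last xs)"])
qed (auto simp: L_def)

lemma sum_L_Suc: "(\<Sum>xs\<in>L (Suc t). f xs) = (\<Sum>ys\<in>L t. f (ys @ [True]) + f (ys @ [False]))"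
proof -
  have inj: "inj_on (\<lambda>(ys,b). ys @ [b]) (L t \<times> (UNIV::bool set))"
    by (auto simp: inj_on_def)
  have "(\<Sum>xs\<in>L (Suc t). f xs) = (\<Sum>p\<in>L t \<times> UNIV. f (fst p @ [snd p]))"
    unfolding L_Suc by (subst sum.reindex[OF inj]) (auto simp: case_prod_beta intro!: sum.cong)
  also have "\<dots> = (\<Sum>ys\<in>L t. \<Sum>b\<in>UNIV. f (ys @ [b]))"
    by (simp add: sum.cartesian_product case_prod_beta)
  also have "\<dots> = (\<Sum>ys\<in>L t. f (ys @ [True]) + f (ys @ [False]))"
    by (simp add: UNIV_bool add.commute)
  finally show ?thesis .
qed

lemma Pr_alt: "Pr r t A = (\<Sum>xs\<in>L t. if A xs then path_prob r xs else 0)"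
proof -
  have "{xs. length xs = t \<and> A xs} = {xs\<in>L t. A xs}" by (auto simp: L_def)
  then show ?thesis unfolding Pr_def by (simp add: sum.inter_filter)
qed

lemma path_prob_snoc: "path_prob r (ys @ [b]) = path_prob r ys * (if b then r else 1 - r)"
  by (simp add: path_prob_def)

lemma path_prob_nonneg: "0 \<le> r \<Longrightarrow> r \<le> 1 \<Longrightarrow> 0 \<le> path_prob r xs"
  unfolding path_prob_def by (induction xs) auto

definition N :: "bool list \<Rightarrow> nat" where "N xs = length (filter id xs)"

lemma Sn_full: "length xs = t \<Longrightarrow> Sn xs t = int (N xs)"
  by (simp add: Sn_def N_def)

lemma N_le: "N xs \<le> length xs" unfolding N_def by simp

lemma mgf: fixes s :: real shows "(\<Sum>xs\<in>L t. path_prob r xs * exp (s * N xs)) = (1 - r + r * exp s) ^ t"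
proof (induction t)
  case 0 then show ?case by (simp add: L_def path_prob_def N_def)
next
  case (Suc t)
  have "(\<Sum>xs\<in>L (Suc t). path_prob r xs * exp (s * N xs))
     = (\<Sum>ys\<in>L t. path_prob r ys * exp (s * N ys) * (1 - r + r * exp s))"
    unfolding sum_L_Suc
    by (intro sum.cong) (auto simp: path_prob_snoc N_def distrib_left exp_add algebra_simps)
  also have "\<dots> = (1 - r + r * exp s) ^ Suc t"
    by (simp add: sum_distrib_right[symmetric] Suc)
  finally show ?case .
qed

lemma Pr_True: "Pr r t (\<lambda>_. True) = 1"
  using mgf[where s=0 and r=r and t=t] by (simp add: Pr_alt)

lemma Pr_nonneg: "0 \<le> r \<Longrightarrow> r \<le> 1 \<Longrightarrow> 0 \<le> Pr r t A"
  unfolding Pr_alt by (intro sum_nonneg) (auto simp: path_prob_nonneg)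

lemma Pr_mono: "0 \<le> r \<Longrightarrow> r \<le> 1 \<Longrightarrow> (\<And>xs. length xs = t \<Longrightarrow> A xs \<Longrightarrow> B xs) \<Longrightarrow> Pr r t A \<le> Pr r t B"
  unfolding Pr_alt by (intro sum_mono) (auto simp: path_prob_nonneg L_def)

lemma Pr_le1: "0 \<le> r \<Longrightarrow> r \<le> 1 \<Longrightarrow> Pr r t A \<le> 1"
  using Pr_mono[of r t A "\<lambda>_. True"] Pr_True[of r t] by simp

lemma Pr_union: "0 \<le> r \<Longrightarrow> r \<le> 1 \<Longrightarrow> Pr r t (\<lambda>xs. A xs \<or> B xs) \<le> Pr r t A + Pr r t B"
  unfolding Pr_alt sum.distrib[symmetric] by (intro sum_mono) (auto simp: path_prob_nonneg)

lemma Pr_false: "(\<And>xs. length xs = t \<Longrightarrow> \<not> A xs) \<Longrightarrow> Pr r t A = 0"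
  unfolding Pr_alt by (intro sum.neutral) (auto simp: L_def)

lemma Pr_cong: "(\<And>xs. length xs = t \<Longrightarrow> A xs = B xs) \<Longrightarrow> Pr r t A = Pr r t B"
  unfolding Pr_alt by (intro sum.cong) (auto simp: L_def)

lemma Pr_marg: assumes "\<And>ys b. length ys = t \<Longrightarrow> A (ys @ [b]) = A' ys"
  shows "Pr r (Suc t) A = Pr r t A'"
  unfolding Pr_alt sum_L_Suc
  by (intro sum.cong) (auto simp: assms L_def path_prob_snoc algebra_simps)



lemma exp_neg_bound: fixes s :: real assumes "0 \<le> s" shows "exp (-s) \<le> 1 - s + s^2"
proof -
  have "exp (-s) = 1 / exp s" by (simp add: exp_minus field_simps)
  also have "\<dots> \<le> 1 / (1 + s)" using assms by (intro divide_left_mono) (auto simp: add_pos_nonneg)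
  also have "\<dots> \<le> 1 - s + s^2"
  proof -
    have "1 \<le> (1 + s) * (1 - s + s^2)" using assms by (simp add: algebra_simps power2_eq_square power3_eq_cube)
    then show ?thesis using assms by (simp add: field_simps)
  qed
  finally show ?thesis .
qed

lemma base_bound: fixes r s :: real assumes "0 \<le> r" "r \<le> 1" "exp s \<le> 1 + s + s^2"
  shows "1 - r + r * exp s \<le> exp (r * s + s^2)"
proof -
  have "r * exp s \<le> r * (1 + s + s^2)" using assms(1,3) by (rule mult_left_mono[rotated])
  then have "1 - r + r * exp s \<le> 1 + r * (s + s^2)" by (simp add: algebra_simps)
  also have "\<dots> \<le> exp (r * (s + s^2))" by (rule exp_ge_add_one_self[unfolded add.commute[of 1]] | simp add: add.commute)
  also have "\<dots> \<le> exp (r * s + s^2)"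
  proof -
    have "r * s^2 \<le> s^2" using assms(1,2) by (intro mult_left_le_one_le) auto
    then show ?thesis by (simp add: algebra_simps)
  qed
  finally show ?thesis .
qed

lemma chernoff_gen:
  fixes r s c :: real assumes r: "0 \<le> r" "r \<le> 1" and "\<And>xs. P xs \<Longrightarrow> 0 \<le> s * (real (N xs) - c)"
  shows "Pr r t P \<le> exp (- s * c) * (1 - r + r * exp s) ^ t"
proof -
  have "Pr r t P \<le> (\<Sum>xs\<in>L t. path_prob r xs * exp (s * (real (N xs) - c)))"
    unfolding Pr_alt
  proof (intro sum_mono)
    fix xs show "(if P xs then path_prob r xs else 0) \<le> path_prob r xs * exp (s * (real (N xs) - c))"
    proof (cases "P xs")
      case True
      then have "1 \<le> exp (s * (real (N xs) - c))" using assms(3)[of xs] by simp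
      then show ?thesis using True path_prob_nonneg[OF r, of xs] by (metis mult.right_neutral mult_left_mono)
    qed (simp add: path_prob_nonneg[OF r])
  qed
  also have "\<dots> = exp (- s * c) * (\<Sum>xs\<in>L t. path_prob r xs * exp (s * real (N xs)))"
    by (simp add: sum_distrib_left right_diff_distrib exp_diff algebra_simps exp_minus field_simps)
  also have "\<dots> = exp (- s * c) * (1 - r + r * exp s) ^ t" by (simp add: mgf)
  finally show ?thesis .
qed

lemma chernoff_upper:
  fixes r y :: real assumes r: "0 \<le> r" "r \<le> 1" and t: "t > 0" and y: "0 \<le> y"
  shows "Pr r t (\<lambda>xs. real (N xs) \<ge> r * t + y) \<le> exp (- (y ^ 2) / (4 * t))"
proof (cases "y \<le> 2 * t")
  case False
  have "Pr r t (\<lambda>xs. real (N xs) \<ge> r * t + y) = 0"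
  proof (rule Pr_false)
    fix xs :: "bool list" assume "length xs = t"
    then have "real (N xs) \<le> t" using N_le[of xs] by simp
    moreover have "r * t \<ge> 0" using r by simp
    ultimately show "\<not> real (N xs) \<ge> r * t + y" using False by linarith
  qed
  then show ?thesis by simp
next
  case True
  define s where "s = y / (2 * t)"
  have s: "0 \<le> s" "s \<le> 1" using True t y by (auto simp: s_def)
  have "Pr r t (\<lambda>xs. real (N xs) \<ge> r * t + y) \<le> exp (- s * (r * t + y)) * (1 - r + r * exp s) ^ t"
    by (rule chernoff_gen[OF r]) (use s in simp)
  also have "\<dots> \<le> exp (- s * (r * t + y)) * exp (r * s + s^2) ^ t"
    using base_bound[OF r exp_bound[OF s]] r s
    by (intro mult_left_mono power_mono) (auto simp: add_nonneg_nonneg)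
  also have "\<dots> = exp (- s * (r * t + y) + t * (r * s + s^2))"
    unfolding exp_add exp_of_nat_mult by simp
  also have "\<dots> \<le> exp (- s * y + t * s^2)"
  proof -
    have "t * (r * s^2) \<le> t * s^2" using r by (intro mult_left_mono mult_left_le_one_le) auto
    then show ?thesis by (simp add: algebra_simps)
  qed
  also have "- s * y + t * s^2 = - (y ^ 2) / (4 * t)" using t by (simp add: s_def power2_eq_square field_simps)
  finally show ?thesis .
qed

lemma chernoff_lower:
  fixes r y :: real assumes r: "0 \<le> r" "r \<le> 1" and t: "t > 0" and y: "0 \<le> y"
  shows "Pr r t (\<lambda>xs. real (N xs) \<le> r * t - y) \<le> exp (- (y ^ 2) / (4 * t))"
proof (cases "y \<le> 2 * t")
  case False
  have "Pr r t (\<lambda>xs. real (N xs) \<le> r * t - y) = 0"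
  proof (rule Pr_false)
    fix xs :: "bool list" assume "length xs = t"
    have "r * t \<le> t" using r by (simp add: mult_left_le_one_le)
    then show "\<not> real (N xs) \<le> r * t - y" using False by linarith
  qed
  then show ?thesis by simp
next
  case True
  define s where "s = y / (2 * t)"
  have s: "0 \<le> s" "s \<le> 1" using True t y by (auto simp: s_def)
  have "Pr r t (\<lambda>xs. real (N xs) \<le> r * t - y) \<le> exp (- (-s) * (r * t - y)) * (1 - r + r * exp (-s)) ^ t"
    by (rule chernoff_gen[OF r]) (use s in \<open>simp add: mult_nonneg_nonpos\<close>)
  also have "\<dots> = exp (s * (r * t - y)) * (1 - r + r * exp (-s)) ^ t" by simp
  also have "\<dots> \<le> exp (s * (r * t - y)) * exp (r * (-s) + (-s)^2) ^ t"
  proof -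
    have hb: "1 - r + r * exp (-s) \<le> exp (r * (-s) + (-s)^2)"
      using base_bound[OF r, of "-s"] exp_neg_bound[OF s(1)] by simp
    have "0 \<le> 1 - r + r * exp (-s)" using r by (simp add: add_nonneg_nonneg)
    then show ?thesis using hb by (intro mult_left_mono power_mono) auto
  qed
  also have "\<dots> = exp (s * (r * t - y) + t * (r * (-s) + s^2))"
    unfolding exp_add exp_of_nat_mult by simp
  also have "\<dots> \<le> exp (- s * y + t * s^2)"
  proof -
    have "t * (r * s^2) \<le> t * s^2" using r by (intro mult_left_mono mult_left_le_one_le) auto
    then show ?thesis by (simp add: algebra_simps)
  qed
  also have "- s * y + t * s^2 = - (y ^ 2) / (4 * t)" using t by (simp add: s_def power2_eq_square field_simps)
  finally show ?thesis .
qed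



lemma bnds_eq: "bnds e a t s = (if s \<le> t then Bnd e a s else (0,0))"
proof (induction t arbitrary: s)
  case 0 then show ?case by (simp add: Bnd_def)
next
  case (Suc t) then show ?case by (auto simp: Bnd_def)
qed

lemma cont_cong: "(\<And>s. 1 \<le> s \<Longrightarrow> s < t \<Longrightarrow> B s = B' s) \<Longrightarrow> cont B xs t = cont B' xs t"
  unfolding cont_def by auto

lemma stop_up_cong: "(\<And>s. 1 \<le> s \<Longrightarrow> s < t \<Longrightarrow> B s = B' s) \<Longrightarrow> stop_up B xs t = stop_up B' xs t"
  unfolding stop_up_def
  by (intro bex_cong refl conj_cong cont_cong) auto

lemma stop_low_cong: "(\<And>s. 1 \<le> s \<Longrightarrow> s < t \<Longrightarrow> B s = B' s) \<Longrightarrow> stop_low B xs t = stop_low B' xs t"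
  unfolding stop_low_def
  by (intro bex_cong refl conj_cong cont_cong) auto

lemma Sn_snoc: "s \<le> length ys \<Longrightarrow> Sn (ys @ [b]) s = Sn ys s"
  by (simp add: Sn_def)

lemma Sn_le: "Sn xs s \<le> int s"
  unfolding Sn_def by (metis dual_order.trans length_filter_le length_take min.cobounded2 of_nat_mono)

lemma Sn_nonneg: "0 \<le> Sn xs s" unfolding Sn_def by simp

lemma cont_snoc: "t \<le> Suc (length ys) \<Longrightarrow> cont B (ys @ [b]) t = cont B ys t"
  unfolding cont_def by (intro ball_cong refl) (auto simp: Sn_snoc)

lemma stop_up_snoc: "t \<le> Suc (length ys) \<Longrightarrow> stop_up B (ys @ [b]) t = stop_up B ys t"
  unfolding stop_up_def by (intro bex_cong refl) (auto simp: Sn_snoc cont_snoc)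

lemma stop_low_snoc: "t \<le> Suc (length ys) \<Longrightarrow> stop_low B (ys @ [b]) t = stop_low B ys t"
  unfolding stop_low_def by (intro bex_cong refl) (auto simp: Sn_snoc cont_snoc)

lemma trichotomy: "cont B xs t \<or> stop_up B xs t \<or> stop_low B xs t"
proof (cases "cont B xs t")
  case False
  then obtain s where s: "s \<in> {1..<t}" "\<not> (snd (B s) < Sn xs s \<and> Sn xs s < fst (B s))"
    unfolding cont_def by blast
  define P where "P s \<longleftrightarrow> s \<in> {1..<t} \<and> \<not> (snd (B s) < Sn xs s \<and> Sn xs s < fst (B s))" for s
  have "P s" using s by (simp add: P_def)
  define m where "m = (LEAST s. P s)"
  have Pm: "P m" unfolding m_def by (rule LeastI[of P s]) fact
  have "cont B xs m"
    unfolding cont_def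
  proof
    fix s' assume "s' \<in> {1..<m}"
    then have "\<not> P s'" using not_less_Least[of s' P] by (simp add: m_def)
    then show "snd (B s') < Sn xs s' \<and> Sn xs s' < fst (B s')" using \<open>s' \<in> {1..<m}\<close> Pm by (auto simp: P_def)
  qed
  then show ?thesis using Pm unfolding P_def stop_up_def stop_low_def by force
qed simp

lemma stop_up_Suc: "1 \<le> t \<Longrightarrow> stop_up B xs (Suc t) = (stop_up B xs t \<or> (cont B xs t \<and> Sn xs t \<ge> fst (B t)))"
  unfolding stop_up_def by (auto simp: less_Suc_eq)

lemma stop_low_Suc: "1 \<le> t \<Longrightarrow> stop_low B xs (Suc t) = (stop_low B xs t \<or> (cont B xs t \<and> Sn xs t \<le> snd (B t)))"
  unfolding stop_low_def by (auto simp: less_Suc_eq)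

lemma least_int:
  fixes P :: "int \<Rightarrow> bool" assumes "P j0" "\<And>j. P j \<Longrightarrow> lo \<le> j"
  shows "P (LEAST j. P j) \<and> (LEAST j. P j) \<le> j0"
proof -
  define S where "S = {j. P j \<and> j \<le> j0}"
  have fin: "finite S" by (rule finite_subset[of _ "{lo..j0}"]) (auto simp: S_def assms(2))
  have "j0 \<in> S" using assms(1) by (simp add: S_def)
  define m where "m = Min S"
  have mS: "m \<in> S" using fin \<open>j0 \<in> S\<close> unfolding m_def by (intro Min_in) auto
  have "(LEAST j. P j) = m"
  proof (rule Least_equality)
    show "P m" using mS by (simp add: S_def)
    fix y assume "P y"
    show "m \<le> y"
    proof (cases "y \<le> j0")
      case True then have "y \<in> S" using \<open>P y\<close> by (simp add: S_def)
      then show ?thesis using fin by (simp add: m_def)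
    next
      case False then show ?thesis using mS by (simp add: S_def)
    qed
  qed
  then show ?thesis using mS by (simp add: S_def)
qed

lemma greatest_int:
  fixes P :: "int \<Rightarrow> bool" assumes "P j0" "\<And>j. P j \<Longrightarrow> j \<le> hi"
  shows "P (GREATEST j. P j) \<and> j0 \<le> (GREATEST j. P j)"
proof -
  define S where "S = {j. P j \<and> j0 \<le> j}"
  have fin: "finite S" by (rule finite_subset[of _ "{j0..hi}"]) (auto simp: S_def assms(2))
  have "j0 \<in> S" using assms(1) by (simp add: S_def)
  define m where "m = Max S"
  have mS: "m \<in> S" using fin \<open>j0 \<in> S\<close> unfolding m_def by (intro Max_in) auto
  have "(GREATEST j. P j) = m"
  proof (rule Greatest_equality)
    show "P m" using mS by (simp add: S_def)
    fix y assume "P y"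
    show "y \<le> m"
    proof (cases "j0 \<le> y")
      case True then have "y \<in> S" using \<open>P y\<close> by (simp add: S_def)
      then show ?thesis using fin by (simp add: m_def)
    next
      case False then show ?thesis using mS by (simp add: S_def)
    qed
  qed
  then show ?thesis using mS by (simp add: S_def)
qed

locale bsetup =
  fixes e :: "nat \<Rightarrow> real" and a :: real
  assumes a01: "0 \<le> a" "a \<le> 1" and e0: "0 \<le> e 0" and emono: "mono e" and ele: "\<And>t. e t \<le> 1/4"
begin

abbreviation "Bd \<equiv> Bnd e a"

definition condU :: "nat \<Rightarrow> int \<Rightarrow> bool" where
  "condU t j \<longleftrightarrow> j \<ge> 1 \<and> Pr a t (\<lambda>xs. cont Bd xs t \<and> Sn xs t \<ge> j) + Pr a t (\<lambda>xs. stop_up Bd xs t) \<le> e t"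

definition condL :: "nat \<Rightarrow> int \<Rightarrow> bool" where
  "condL t j \<longleftrightarrow> Pr a t (\<lambda>xs. cont Bd xs t \<and> Sn xs t \<le> j) + Pr a t (\<lambda>xs. stop_low Bd xs t) \<le> e t"

lemma bnds_agree: "s < Suc t \<Longrightarrow> bnds e a t s = Bd s"
  by (simp add: bnds_eq)

lemma U_eq: "fst (Bd (Suc t)) = (LEAST j. condU (Suc t) j)"
proof -
  have "fst (Bd (Suc t)) = U_new e a (bnds e a t) (Suc t)" by (simp add: Bnd_def)
  also have "\<dots> = (LEAST j. condU (Suc t) j)"
    unfolding U_new_def condU_def
    by (simp add: cont_cong[of "Suc t" "bnds e a t" Bd] stop_up_cong[of "Suc t" "bnds e a t" Bd] bnds_agree)
  finally show ?thesis .
qed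

lemma L_eq: "snd (Bd (Suc t)) = (GREATEST j. condL (Suc t) j)"
proof -
  have "snd (Bd (Suc t)) = L_new e a (bnds e a t) (Suc t)" by (simp add: Bnd_def)
  also have "\<dots> = (GREATEST j. condL (Suc t) j)"
    unfolding L_new_def condL_def
    by (simp add: cont_cong[of "Suc t" "bnds e a t" Bd] stop_low_cong[of "Suc t" "bnds e a t" Bd] bnds_agree)
  finally show ?thesis .
qed

lemma marg_up: "Pr a (Suc t) (\<lambda>xs. stop_up Bd xs (Suc t)) = Pr a t (\<lambda>xs. stop_up Bd xs (Suc t))"
  by (rule Pr_marg) (simp add: stop_up_snoc)

lemma marg_low: "Pr a (Suc t) (\<lambda>xs. stop_low Bd xs (Suc t)) = Pr a t (\<lambda>xs. stop_low Bd xs (Suc t))"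
  by (rule Pr_marg) (simp add: stop_low_snoc)

lemma emono': "s \<le> t \<Longrightarrow> e s \<le> e t" using emono by (simp add: mono_def)

lemma condU_U:
  assumes SU: "Pr a t (\<lambda>xs. stop_up Bd xs (Suc t)) \<le> e t"
  shows "condU (Suc t) (fst (Bd (Suc t)))" "\<And>j. condU (Suc t) j \<Longrightarrow> fst (Bd (Suc t)) \<le> j"
proof -
  have w: "condU (Suc t) (int t + 2)"
  proof -
    have "Pr a (Suc t) (\<lambda>xs. cont Bd xs (Suc t) \<and> Sn xs (Suc t) \<ge> int t + 2) = 0"
    proof (rule Pr_false)
      fix xs :: "bool list" show "\<not> (cont Bd xs (Suc t) \<and> Sn xs (Suc t) \<ge> int t + 2)"
        using Sn_le[of xs "Suc t"] by simp
    qed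
    then show ?thesis unfolding condU_def marg_up using SU emono'[of t "Suc t"] by simp
  qed
  have b: "\<And>j. condU (Suc t) j \<Longrightarrow> 1 \<le> j" by (simp add: condU_def)
  show "condU (Suc t) (fst (Bd (Suc t)))" unfolding U_eq using least_int[where P="condU (Suc t)", OF w b] by blast
  fix j assume "condU (Suc t) j"
  then show "fst (Bd (Suc t)) \<le> j" unfolding U_eq using least_int[where P="condU (Suc t)", OF _ b] by blast
qed

lemma condL_L:
  assumes SU: "Pr a t (\<lambda>xs. stop_up Bd xs (Suc t)) \<le> e t"
    and SL: "Pr a t (\<lambda>xs. stop_low Bd xs (Suc t)) \<le> e t"
  shows "condL (Suc t) (snd (Bd (Suc t)))" "\<And>j. condL (Suc t) j \<Longrightarrow> j \<le> snd (Bd (Suc t))"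
proof -
  have w: "condL (Suc t) (-1)"
  proof -
    have "Pr a (Suc t) (\<lambda>xs. cont Bd xs (Suc t) \<and> Sn xs (Suc t) \<le> -1) = 0"
    proof (rule Pr_false)
      fix xs :: "bool list" show "\<not> (cont Bd xs (Suc t) \<and> Sn xs (Suc t) \<le> -1)"
        using Sn_nonneg[of xs "Suc t"] by simp
    qed
    then show ?thesis unfolding condL_def marg_low using SL emono'[of t "Suc t"] by simp
  qed
  have b: "j \<le> int t" if "condL (Suc t) j" for j
  proof (rule ccontr)
    assume "\<not> j \<le> int t"
    then have "Pr a (Suc t) (\<lambda>xs. cont Bd xs (Suc t) \<and> Sn xs (Suc t) \<le> j) = Pr a (Suc t) (\<lambda>xs. cont Bd xs (Suc t))"
    proof (intro Pr_cong)
      fix xs :: "bool list" show "(cont Bd xs (Suc t) \<and> Sn xs (Suc t) \<le> j) = cont Bd xs (Suc t)"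
        using Sn_le[of xs "Suc t"] \<open>\<not> j \<le> int t\<close> by auto
    qed
    then have c: "Pr a (Suc t) (\<lambda>xs. cont Bd xs (Suc t)) + Pr a (Suc t) (\<lambda>xs. stop_low Bd xs (Suc t)) \<le> e (Suc t)"
      using that by (simp add: condL_def)
    have "1 = Pr a (Suc t) (\<lambda>xs. cont Bd xs (Suc t) \<or> stop_up Bd xs (Suc t) \<or> stop_low Bd xs (Suc t))"
      using trichotomy Pr_True[of a "Suc t"] by simp
    also have "\<dots> \<le> Pr a (Suc t) (\<lambda>xs. cont Bd xs (Suc t)) + (Pr a (Suc t) (\<lambda>xs. stop_up Bd xs (Suc t)) + Pr a (Suc t) (\<lambda>xs. stop_low Bd xs (Suc t)))"
      using Pr_union[OF a01, of "Suc t" "\<lambda>xs. cont Bd xs (Suc t)" "\<lambda>xs. stop_up Bd xs (Suc t) \<or> stop_low Bd xs (Suc t)"]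
        Pr_union[OF a01, of "Suc t" "\<lambda>xs. stop_up Bd xs (Suc t)" "\<lambda>xs. stop_low Bd xs (Suc t)"]
      by linarith
    finally show False using c SU ele[of t] ele[of "Suc t"] unfolding marg_up by simp
  qed
  show "condL (Suc t) (snd (Bd (Suc t)))" unfolding L_eq using greatest_int[where P="condL (Suc t)", OF w b] by blast
  fix j assume "condL (Suc t) j"
  then show "j \<le> snd (Bd (Suc t))" unfolding L_eq using greatest_int[where P="condL (Suc t)", OF _ b] by blast
qed

lemma invariant:
  "Pr a t (\<lambda>xs. stop_up Bd xs (Suc t)) \<le> e t \<and> Pr a t (\<lambda>xs. stop_low Bd xs (Suc t)) \<le> e t"
proof (induction t)
  case 0
  have "Pr a 0 (\<lambda>xs. stop_up Bd xs (Suc 0)) = 0" "Pr a 0 (\<lambda>xs. stop_low Bd xs (Suc 0)) = 0"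
    by (auto intro!: Pr_false simp: stop_up_def stop_low_def)
  then show ?case using e0 by simp
next
  case (Suc t)
  have U: "condU (Suc t) (fst (Bd (Suc t)))" using condU_U Suc by blast
  have L: "condL (Suc t) (snd (Bd (Suc t)))" using condL_L Suc by blast
  have "Pr a (Suc t) (\<lambda>xs. stop_up Bd xs (Suc (Suc t)))
     = Pr a (Suc t) (\<lambda>xs. stop_up Bd xs (Suc t) \<or> (cont Bd xs (Suc t) \<and> Sn xs (Suc t) \<ge> fst (Bd (Suc t))))"
    by (intro Pr_cong) (simp add: stop_up_Suc)
  also have "\<dots> \<le> e (Suc t)"
    using Pr_union[OF a01, of "Suc t" "\<lambda>xs. stop_up Bd xs (Suc t)" "\<lambda>xs. cont Bd xs (Suc t) \<and> Sn xs (Suc t) \<ge> fst (Bd (Suc t))"] U unfolding condU_def by linarith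
  finally have 1: "Pr a (Suc t) (\<lambda>xs. stop_up Bd xs (Suc (Suc t))) \<le> e (Suc t)" .
  have "Pr a (Suc t) (\<lambda>xs. stop_low Bd xs (Suc (Suc t)))
     = Pr a (Suc t) (\<lambda>xs. stop_low Bd xs (Suc t) \<or> (cont Bd xs (Suc t) \<and> Sn xs (Suc t) \<le> snd (Bd (Suc t))))"
    by (intro Pr_cong) (simp add: stop_low_Suc)
  also have "\<dots> \<le> e (Suc t)"
    using Pr_union[OF a01, of "Suc t" "\<lambda>xs. stop_low Bd xs (Suc t)" "\<lambda>xs. cont Bd xs (Suc t) \<and> Sn xs (Suc t) \<le> snd (Bd (Suc t))"] L unfolding condL_def by linarith
  finally show ?case using 1 by simp
qed

lemma U_le: "condU (Suc t) j \<Longrightarrow> fst (Bd (Suc t)) \<le> j"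
  using condU_U invariant by blast

lemma L_ge: "condL (Suc t) j \<Longrightarrow> j \<le> snd (Bd (Suc t))"
  using condL_L invariant by blast

end


locale bsetup2 = bsetup +
  fixes lam q :: real and T :: nat
  assumes T1: "T \<ge> 1" and incr: "\<And>t. t \<ge> T \<Longrightarrow> e t - e (t - 1) \<ge> lam * real t powr (- q)"
begin

lemma Suc_form: "t \<ge> 1 \<Longrightarrow> \<exists>t'. t = Suc t'" by (cases t) auto

lemma U_bound:
  assumes t: "t \<ge> T" and x: "0 \<le> x" and ex: "exp (- (x^2) / (4 * t)) \<le> lam * real t powr (- q)"
  shows "real_of_int (fst (Bd t)) \<le> a * t + x + 1"
proof -
  obtain t' where t': "t = Suc t'" using Suc_form[of t] t T1 by auto
  define j0 where "j0 = max 1 \<lceil>a * t + x\<rceil>"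
  have "real_of_int j0 \<le> a * t + x + 1"
  proof -
    have "a * t + x \<ge> 0" using a01 x by simp
    then show ?thesis unfolding j0_def by (simp add: max_def)
  qed
  moreover have "condU t j0"
  proof -
    have "Pr a t (\<lambda>xs. cont Bd xs t \<and> Sn xs t \<ge> j0) \<le> Pr a t (\<lambda>xs. real (N xs) \<ge> a * t + 0 + x)"
    proof (rule Pr_mono[OF a01])
      fix xs :: "bool list" assume "length xs = t" "cont Bd xs t \<and> Sn xs t \<ge> j0"
      then have "int (N xs) \<ge> \<lceil>a * t + x\<rceil>" by (simp add: Sn_full j0_def)
      then show "real (N xs) \<ge> a * t + 0 + x" by linarith
    qed
    also have "\<dots> \<le> exp (- (x^2) / (4 * t))" using chernoff_upper[OF a01, of t x] t' x by simp
    finally have 1: "Pr a t (\<lambda>xs. cont Bd xs t \<and> Sn xs t \<ge> j0) \<le> lam * real t powr (- q)" using ex by simp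
    have 2: "Pr a t (\<lambda>xs. stop_up Bd xs t) \<le> e (t - 1)"
      using invariant[of t'] marg_up[of t'] t' by simp
    show ?thesis unfolding condU_def using 1 2 incr[OF t] by (simp add: j0_def)
  qed
  then have "fst (Bd t) \<le> j0" using U_le t' by simp
  ultimately show ?thesis by linarith
qed

lemma L_bound:
  assumes t: "t \<ge> T" and x: "0 \<le> x" and ex: "exp (- (x^2) / (4 * t)) \<le> lam * real t powr (- q)"
  shows "real_of_int (snd (Bd t)) \<ge> a * t - x - 1"
proof -
  obtain t' where t': "t = Suc t'" using Suc_form[of t] t T1 by auto
  define j0 where "j0 = \<lfloor>a * t - x\<rfloor>"
  have "real_of_int j0 \<ge> a * t - x - 1" unfolding j0_def by linarith
  moreover have "condL t j0"
  proof -
    have "Pr a t (\<lambda>xs. cont Bd xs t \<and> Sn xs t \<le> j0) \<le> Pr a t (\<lambda>xs. real (N xs) \<le> a * t - x)"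
    proof (rule Pr_mono[OF a01])
      fix xs :: "bool list" assume "length xs = t" "cont Bd xs t \<and> Sn xs t \<le> j0"
      then have "int (N xs) \<le> \<lfloor>a * t - x\<rfloor>" by (simp add: Sn_full j0_def)
      then show "real (N xs) \<le> a * t - x" by linarith
    qed
    also have "\<dots> \<le> exp (- (x^2) / (4 * t))" using chernoff_lower[OF a01, of t x] t' x by simp
    finally have 1: "Pr a t (\<lambda>xs. cont Bd xs t \<and> Sn xs t \<le> j0) \<le> lam * real t powr (- q)" using ex by simp
    have 2: "Pr a t (\<lambda>xs. stop_low Bd xs t) \<le> e (t - 1)"
      using invariant[of t'] marg_low[of t'] t' by simp
    show ?thesis unfolding condL_def using 1 2 incr[OF t] by simp
  qed
  then have "j0 \<le> snd (Bd t)" using L_ge t' by simp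
  ultimately show ?thesis by linarith
qed

lemma pointwise:
  assumes r: "0 \<le> r" "r \<le> 1" and t: "t \<ge> T" and x: "0 \<le> x" and y: "0 \<le> y"
    and ex: "exp (- (x^2) / (4 * t)) \<le> lam * real t powr (- q)"
    and far: "r * t - y \<ge> a * t + x + 1 \<or> r * t + y \<le> a * t - x - 1"
  shows "no_stop_prob e a r t \<le> exp (- (y^2) / (4 * t))"
proof -
  have t1: "t \<ge> 1" "t > 0" using t T1 by auto
  have in_cont: "snd (Bd t) < Sn xs t \<and> Sn xs t < fst (Bd t)" if "cont Bd xs (Suc t)" for xs
    using that t1 unfolding cont_def by auto
  note U = U_bound[OF t x ex] and L = L_bound[OF t x ex]
  from far show ?thesis
  proof
    assume h: "r * t - y \<ge> a * t + x + 1"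
    have "no_stop_prob e a r t \<le> Pr r t (\<lambda>xs. real (N xs) \<le> r * t - y)"
      unfolding no_stop_prob_def
    proof (rule Pr_mono[OF r])
      fix xs :: "bool list" assume "length xs = t" "cont Bd xs (Suc t)"
      then have "int (N xs) < fst (Bd t)" using in_cont[of xs] by (simp add: Sn_full)
      then show "real (N xs) \<le> r * t - y" using U h by linarith
    qed
    also have "\<dots> \<le> exp (- (y^2) / (4 * t))" using chernoff_lower[OF r t1(2) y] .
    finally show ?thesis by simp
  next
    assume h: "r * t + y \<le> a * t - x - 1"
    have "no_stop_prob e a r t \<le> Pr r t (\<lambda>xs. real (N xs) \<ge> r * t + y)"
      unfolding no_stop_prob_def
    proof (rule Pr_mono[OF r])
      fix xs :: "bool list" assume "length xs = t" "cont Bd xs (Suc t)"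
      then have "int (N xs) > snd (Bd t)" using in_cont[of xs] by (simp add: Sn_full)
      then show "real (N xs) \<ge> r * t + y" using L h by linarith
    qed
    also have "\<dots> \<le> exp (- (y^2) / (4 * t))" using chernoff_upper[OF r t1(2) y] .
    finally show ?thesis by simp
  qed
qed

end


lemma path_prob_pow: "path_prob r xs = r ^ N xs * (1 - r) ^ (length xs - N xs)"
proof (induction xs)
  case Nil then show ?case by (simp add: path_prob_def N_def)
next
  case (Cons x xs)
  have "N xs \<le> length xs" by (rule N_le)
  then show ?case using Cons
    by (cases x) (auto simp: path_prob_def N_def Suc_diff_le)
qed

lemma meas_Pr:
  assumes [measurable]: "p \<in> borel_measurable M"
  shows "(\<lambda>w. Pr (p w) t A) \<in> borel_measurable M"
  unfolding Pr_alt path_prob_pow by measurable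

locale fullsetup = bsetup2 e a lam q T for e a lam q T +
  fixes \<Omega> :: "'w measure" and p :: "'w \<Rightarrow> real" and \<xi> A Bb c :: real
  assumes ps: "prob_space \<Omega>" and pm: "p \<in> borel_measurable \<Omega>" and p01: "\<forall>w\<in>space \<Omega>. p w \<in> {0..1}"
    and xi: "\<xi> > 0" and lam: "lam > 0" and AB: "A < a" "a < Bb" and c: "c > 0"
    and hold: "\<forall>x\<in>{A<..<Bb}. \<forall>y\<in>{A<..<Bb}.
            \<bar>measure \<Omega> {w\<in>space \<Omega>. p w \<le> x} - measure \<Omega> {w\<in>space \<Omega>. p w \<le> y}\<bar>
              \<le> c * \<bar>x - y\<bar> powr \<xi>"
begin

interpretation Pm: prob_space \<Omega> by (rule ps)

lemma powr_facts:
  assumes t: "t \<ge> (1::nat)" and eta: "0 < \<eta>" "\<eta> < 1"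
  shows "(real t powr ((1+\<eta>)/2))^2 = real t * real t powr \<eta>"
    "real t powr ((\<eta>-1)/2) * real t = real t powr ((1+\<eta>)/2)"
    "real t powr ((1+\<eta>)/2) \<ge> 1"
proof -
  have tp: "real t > 0" using t by simp
  show "(real t powr ((1+\<eta>)/2))^2 = real t * real t powr \<eta>"
    using tp by (simp add: power2_eq_square powr_add[symmetric] powr_add)
  show "real t powr ((\<eta>-1)/2) * real t = real t powr ((1+\<eta>)/2)"
  proof -
    have "real t powr ((\<eta>-1)/2) * real t = real t powr ((\<eta>-1)/2) * real t powr 1" using tp by simp
    also have "\<dots> = real t powr ((\<eta>-1)/2 + 1)" by (rule powr_add[symmetric])
    also have "(\<eta>-1)/2 + 1 = (1+\<eta>)/2" by (simp add: field_simps)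
    finally show ?thesis .
  qed
  show "real t powr ((1+\<eta>)/2) \<ge> 1" using t eta by (intro ge_one_powr_ge_zero) auto
qed

definition "dl \<eta> t = 8 * real t powr ((\<eta>-1)/2)"

lemma pointwise2:
  assumes r: "0 \<le> r" "r \<le> 1" and eta: "0 < \<eta>" "\<eta> < 1" and t: "t \<ge> T"
    and ex: "exp (- (real t powr \<eta>) / 4) \<le> lam * real t powr (- q)"
  shows "no_stop_prob e a r t \<le> exp (- 2 * real t powr \<eta>) + (if \<bar>r - a\<bar> < dl \<eta> t then 1 else 0)"
proof (cases "\<bar>r - a\<bar> < dl \<eta> t")
  case True
  then show ?thesis using Pr_le1[OF r] unfolding no_stop_prob_def
    by (simp add: add_nonneg_nonneg) (smt (verit) exp_gt_zero)
next
  case False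
  have t1: "t \<ge> 1" using t T1 by simp
  have tp: "real t > 0" using t1 by simp
  define x where "x = real t powr ((1+\<eta>)/2)"
  note pf = powr_facts[OF t1 eta, folded x_def]
  have x0: "0 \<le> x" using pf(3) by simp
  have ex': "exp (- (x^2) / (4 * real t)) \<le> lam * real t powr (- q)"
    using ex tp by (simp add: pf(1))
  have dlt: "dl \<eta> t * t = 8 * x" using pf(2) by (simp add: dl_def)
  have far: "r * t - 6 * x \<ge> a * t + x + 1 \<or> r * t + 6 * x \<le> a * t - x - 1"
  proof (cases "r \<ge> a")
    case True
    then have "r - a \<ge> dl \<eta> t" using False by simp
    then have "(r - a) * t \<ge> dl \<eta> t * t" using tp by (intro mult_right_mono) auto
    then show ?thesis using dlt pf(3) by (simp add: algebra_simps)
  next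
    case f2: False
    then have "a - r \<ge> dl \<eta> t" using False by simp
    then have "(a - r) * t \<ge> dl \<eta> t * t" using tp by (intro mult_right_mono) auto
    then show ?thesis using dlt pf(3) by (simp add: algebra_simps)
  qed
  have 1: "no_stop_prob e a r t \<le> exp (- ((6 * x)^2) / (4 * real t))"
    using pointwise[of r t x "6*x"] r t x0 ex' far by simp
  have 2: "- ((6 * x)^2) / (4 * real t) = - 9 * real t powr \<eta>"
    using tp by (simp add: power_mult_distrib pf(1))
  have 3: "exp (- 9 * real t powr \<eta>) \<le> exp (- 2 * real t powr \<eta>)" by simp
  show ?thesis using order_trans[OF 1[unfolded 2] 3] False by simp
qed

lemma F_diff:
  assumes "A < u" "u < Bb" "A < v" "v < Bb" "v \<le> u"
  shows "measure \<Omega> {w\<in>space \<Omega>. \<bar>p w - a\<bar> < (u - v) / 2 \<and> p w \<le> u \<and> v < p w} \<le> c * (u - v) powr \<xi>"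
proof -
  have [measurable]: "p \<in> borel_measurable \<Omega>" by (rule pm)
  have "measure \<Omega> {w\<in>space \<Omega>. \<bar>p w - a\<bar> < (u - v) / 2 \<and> p w \<le> u \<and> v < p w}
     \<le> measure \<Omega> ({w\<in>space \<Omega>. p w \<le> u} - {w\<in>space \<Omega>. p w \<le> v})"
    by (intro Pm.finite_measure_mono) auto
  also have "\<dots> = measure \<Omega> {w\<in>space \<Omega>. p w \<le> u} - measure \<Omega> {w\<in>space \<Omega>. p w \<le> v}"
    using assms(5) by (intro Pm.finite_measure_Diff) auto
  also have "\<dots> \<le> c * \<bar>u - v\<bar> powr \<xi>"
  proof -
    have "\<bar>measure \<Omega> {w\<in>space \<Omega>. p w \<le> u} - measure \<Omega> {w\<in>space \<Omega>. p w \<le> v}\<bar> \<le> c * \<bar>u - v\<bar> powr \<xi>"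
      using hold assms(1-4) by simp
    then show ?thesis by linarith
  qed
  finally show ?thesis using assms(5) by simp
qed

lemma integral_bound:
  assumes eta: "0 < \<eta>" "\<eta> < 1" and t: "t \<ge> T"
    and ex: "exp (- (real t powr \<eta>) / 4) \<le> lam * real t powr (- q)"
    and dlA: "A < a - dl \<eta> t" and dlB: "a + dl \<eta> t < Bb"
  shows "(\<integral>w. no_stop_prob e a (p w) t \<partial>\<Omega>) \<le> exp (- 2 * real t powr \<eta>) + c * 16 powr \<xi> * real t powr (\<xi> * (\<eta> - 1) / 2)"
proof -
  have [measurable]: "p \<in> borel_measurable \<Omega>" by (rule pm)
  have tp: "real t > 0" using t T1 by simp
  define S where "S = {w\<in>space \<Omega>. \<bar>p w - a\<bar> < dl \<eta> t}"
  have Ss: "S \<in> sets \<Omega>" unfolding S_def by measurable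
  have mf: "(\<lambda>w. no_stop_prob e a (p w) t) \<in> borel_measurable \<Omega>"
    unfolding no_stop_prob_def by (rule meas_Pr) simp
  have int1: "integrable \<Omega> (\<lambda>w. no_stop_prob e a (p w) t)"
  proof (rule Pm.integrable_const_bound[where B=1])
    show "AE w in \<Omega>. norm (no_stop_prob e a (p w) t) \<le> 1"
      using p01 by (intro AE_I2) (auto simp: no_stop_prob_def Pr_le1 Pr_nonneg)
  qed (rule mf)
  have fin: "emeasure \<Omega> S < \<top>" using Pm.emeasure_finite[of S] top.not_eq_extremum by blast
  have int2: "integrable \<Omega> (\<lambda>w. exp (- 2 * real t powr \<eta>) + indicator S w)"
    using Ss fin by (intro Bochner_Integration.integrable_add) (auto intro!: integrable_real_indicator)
  have "(\<integral>w. no_stop_prob e a (p w) t \<partial>\<Omega>) \<le> (\<integral>w. exp (- 2 * real t powr \<eta>) + indicator S w \<partial>\<Omega>)"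
  proof (rule integral_mono[OF int1 int2])
    fix w assume w: "w \<in> space \<Omega>"
    then have "0 \<le> p w" "p w \<le> 1" using p01 by auto
    from pointwise2[OF this eta t ex] w show "no_stop_prob e a (p w) t \<le> exp (- 2 * real t powr \<eta>) + indicator S w"
      by (simp add: S_def indicator_def split: if_splits)
  qed
  also have "\<dots> = exp (- 2 * real t powr \<eta>) + measure \<Omega> S"
    using Ss fin by (subst Bochner_Integration.integral_add) (auto intro!: integrable_real_indicator simp: Pm.prob_space Int_absorb2 sets.sets_into_space Pm.emeasure_finite)
  also have "measure \<Omega> S \<le> c * (2 * dl \<eta> t) powr \<xi>"
  proof -
    have dl0: "dl \<eta> t > 0" using tp by (simp add: dl_def)
    have "S = {w\<in>space \<Omega>. \<bar>p w - a\<bar> < ((a + dl \<eta> t) - (a - dl \<eta> t)) / 2 \<and> p w \<le> a + dl \<eta> t \<and> a - dl \<eta> t < p w}"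
      unfolding S_def by auto
    then have "measure \<Omega> S \<le> c * ((a + dl \<eta> t) - (a - dl \<eta> t)) powr \<xi>"
      using F_diff[of "a + dl \<eta> t" "a - dl \<eta> t"] dlA dlB dl0 AB by simp
    then show ?thesis by simp
  qed
  also have "c * (2 * dl \<eta> t) powr \<xi> = c * 16 powr \<xi> * real t powr (\<xi> * (\<eta> - 1) / 2)"
    using tp by (simp add: dl_def powr_mult powr_powr field_simps)
  finally show ?thesis by simp
qed

lemma eventually_bound:
  assumes eta: "0 < \<eta>" "\<eta> < 1"
  shows "eventually (\<lambda>t. (\<integral>w. no_stop_prob e a (p w) t \<partial>\<Omega>) \<le> exp (- 2 * real t powr \<eta>) + c * 16 powr \<xi> * real t powr (\<xi> * (\<eta> - 1) / 2)) sequentially"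
proof -
  have e1: "eventually (\<lambda>t. t \<ge> T) sequentially" by (rule eventually_ge_at_top)
  have e2: "eventually (\<lambda>t::nat. exp (- (real t powr \<eta>) / 4) \<le> lam * real t powr (- q)) sequentially"
    using eta lam by real_asymp
  have e3: "eventually (\<lambda>t::nat. 8 * real t powr ((\<eta>-1)/2) < min (a - A) (Bb - a)) sequentially"
    using eta AB by real_asymp
  show ?thesis
  proof (rule eventually_mono[OF eventually_conj[OF e1 eventually_conj[OF e2 e3]]])
    fix t assume h: "T \<le> t \<and> exp (- (real t powr \<eta>) / 4) \<le> lam * real t powr (- q) \<and> 8 * real t powr ((\<eta>-1)/2) < min (a - A) (Bb - a)"
    then show "(\<integral>w. no_stop_prob e a (p w) t \<partial>\<Omega>) \<le> exp (- 2 * real t powr \<eta>) + c * 16 powr \<xi> * real t powr (\<xi> * (\<eta> - 1) / 2)"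
      using integral_bound[OF eta, of t] by (simp add: dl_def)
  qed
qed

lemma nonneg_int: "0 \<le> (\<integral>w. no_stop_prob e a (p w) t \<partial>\<Omega>)"
  using p01 by (intro Bochner_Integration.integral_nonneg) (auto simp: no_stop_prob_def Pr_nonneg)

end


lemma aux_o: "g < d \<Longrightarrow> \<kappa> > 0 \<Longrightarrow> (\<lambda>t::nat. \<kappa> * real t powr g) \<in> o(\<lambda>t. real t powr d)"
  by real_asymp

lemma aux_o2: "\<eta> > 0 \<Longrightarrow> (\<lambda>t::nat. 2 * exp (- 2 * real t powr \<eta>)) \<in> o(\<lambda>t. real t powr d)"
  by real_asymp

theorem lemma3:
  fixes e :: "nat \<Rightarrow> real" and eps \<alpha> lam q \<xi> :: real and T :: nat
    and \<Omega> :: "'w measure" and p :: "'w \<Rightarrow> real"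
  assumes alpha: "0 < \<alpha>" "\<alpha> < 1"
    and eps: "0 < eps" "eps \<le> 1/4"
    and spend: "0 \<le> e 0" "mono e" "e \<longlonglongrightarrow> eps"
    and incr: "lam > 0" "q > 0" "T \<ge> 1"
      "\<forall>t\<ge>T. e t - e (t - 1) \<ge> lam * real t powr (- q)"
    and P: "prob_space \<Omega>" "p \<in> borel_measurable \<Omega>" "\<forall>\<omega>\<in>space \<Omega>. p \<omega> \<in> {0..1}"
    and holder: "\<xi> > 0"
      "\<exists>a b c. a < \<alpha> \<and> \<alpha> < b \<and> c > 0 \<and>
         (\<forall>x\<in>{a<..<b}. \<forall>y\<in>{a<..<b}.
            \<bar>measure \<Omega> {\<omega>\<in>space \<Omega>. p \<omega> \<le> x} - measure \<Omega> {\<omega>\<in>space \<Omega>. p \<omega> \<le> y}\<bar>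
              \<le> c * \<bar>x - y\<bar> powr \<xi>)"
  shows "(\<forall>\<eta>. 0 < \<eta> \<and> \<eta> < 1 \<longrightarrow> (\<exists>\<kappa> T'. \<forall>t::nat\<ge>T'.
            (\<integral>\<omega>. no_stop_prob e \<alpha> (p \<omega>) t \<partial>\<Omega>)
              \<le> 2 * exp (- 2 * real t powr \<eta>) + \<kappa> * real t powr (\<xi> * (\<eta> - 1) / 2)))
       \<and> (\<forall>d. d > - \<xi> / 2 \<longrightarrow>
            (\<lambda>t::nat. \<integral>\<omega>. no_stop_prob e \<alpha> (p \<omega>) t \<partial>\<Omega>) \<in> o(\<lambda>t. real t powr d))"
proof -
  obtain A Bb c where h: "A < \<alpha>" "\<alpha> < Bb" "c > 0"
    "\<forall>x\<in>{A<..<Bb}. \<forall>y\<in>{A<..<Bb}.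
            \<bar>measure \<Omega> {\<omega>\<in>space \<Omega>. p \<omega> \<le> x} - measure \<Omega> {\<omega>\<in>space \<Omega>. p \<omega> \<le> y}\<bar>
              \<le> c * \<bar>x - y\<bar> powr \<xi>"
    using holder(2) by blast
  have ele: "e t \<le> 1/4" for t using incseq_le[OF spend(2) spend(3), of t] eps(2) by simp
  interpret fullsetup e \<alpha> lam q T \<Omega> p \<xi> A Bb c
  proof unfold_locales
    show "0 \<le> \<alpha>" "\<alpha> \<le> 1" using alpha by auto
    show "0 \<le> e 0" "mono e" by (fact spend(1), fact spend(2))
    show "\<And>t. e t \<le> 1/4" by (fact ele)
    show "1 \<le> T" by (fact incr(3))
    show "\<And>t. T \<le> t \<Longrightarrow> lam * real t powr - q \<le> e t - e (t - 1)" using incr(4) by blast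
    show "emeasure \<Omega> (space \<Omega>) = 1" using P(1) by (rule prob_space.emeasure_space_1)
    show "\<exists>A. countable A \<and> A \<subseteq> sets \<Omega> \<and> \<Union> A = space \<Omega> \<and> (\<forall>a\<in>A. emeasure \<Omega> a \<noteq> \<infinity>)"
      using sigma_finite_measure.sigma_finite_countable[OF prob_space_imp_sigma_finite[OF P(1)]] by blast
    show "emeasure \<Omega> (space \<Omega>) \<noteq> \<top>" using P(1) by (simp add: prob_space.emeasure_space_1)
    show "p \<in> borel_measurable \<Omega>" "\<forall>w\<in>space \<Omega>. p w \<in> {0..1}" by (fact P(2), fact P(3))
    show "0 < \<xi>" "0 < lam" by (fact holder(1), fact incr(1))
    show "A < \<alpha>" "\<alpha> < Bb" "0 < c" by (fact h(1), fact h(2), fact h(3))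
    show "\<forall>x\<in>{A<..<Bb}. \<forall>y\<in>{A<..<Bb}.
            \<bar>measure \<Omega> {w\<in>space \<Omega>. p w \<le> x} - measure \<Omega> {w\<in>space \<Omega>. p w \<le> y}\<bar>
              \<le> c * \<bar>x - y\<bar> powr \<xi>" by (fact h(4))
  qed
  define F where "F t = (\<integral>\<omega>. no_stop_prob e \<alpha> (p \<omega>) t \<partial>\<Omega>)" for t
  define \<kappa> where "\<kappa> = c * 16 powr \<xi>"
  have \<kappa>: "\<kappa> > 0" using h(3) by (simp add: \<kappa>_def)
  have main: "eventually (\<lambda>t. F t \<le> 2 * exp (- 2 * real t powr \<eta>) + \<kappa> * real t powr (\<xi> * (\<eta> - 1) / 2)) sequentially"
    if eta: "0 < \<eta>" "\<eta> < 1" for \<eta>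
    using eventually_bound[OF eta]
  proof eventually_elim
    case (elim t)
    have "0 < exp (- 2 * real t powr \<eta>)" by simp
    then show ?case using elim unfolding F_def \<kappa>_def by linarith
  qed
  have part1: "\<forall>\<eta>. 0 < \<eta> \<and> \<eta> < 1 \<longrightarrow> (\<exists>\<kappa> T'. \<forall>t::nat\<ge>T'.
            F t \<le> 2 * exp (- 2 * real t powr \<eta>) + \<kappa> * real t powr (\<xi> * (\<eta> - 1) / 2))"
  proof (intro allI impI)
    fix \<eta> :: real assume "0 < \<eta> \<and> \<eta> < 1"
    then obtain T' where "\<forall>t\<ge>T'. F t \<le> 2 * exp (- 2 * real t powr \<eta>) + \<kappa> * real t powr (\<xi> * (\<eta> - 1) / 2)"
      using main[of \<eta>] unfolding eventually_sequentially by blast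
    then show "\<exists>\<kappa> T'. \<forall>t::nat\<ge>T'. F t \<le> 2 * exp (- 2 * real t powr \<eta>) + \<kappa> * real t powr (\<xi> * (\<eta> - 1) / 2)"
      by blast
  qed
  have part2: "\<forall>d. d > - \<xi> / 2 \<longrightarrow> F \<in> o(\<lambda>t. real t powr d)"
  proof (intro allI impI)
    fix d :: real assume d: "d > - \<xi> / 2"
    define k where "k = 2 * d / \<xi>"
    have xk: "\<xi> * k = 2 * d" using holder(1) by (simp add: k_def)
    have k1: "1 + k > 0" using d holder(1) by (simp add: k_def field_simps)
    define \<eta> where "\<eta> = min (1/2) ((1 + k) / 2)"
    have eta: "0 < \<eta>" "\<eta> < 1" using k1 by (auto simp: \<eta>_def)
    have "\<eta> - 1 < k" using k1 by (simp add: \<eta>_def min_def)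
    then have "\<xi> * (\<eta> - 1) < \<xi> * k" using holder(1) by simp
    then have g: "\<xi> * (\<eta> - 1) / 2 < d" using xk by simp
    have "(\<lambda>t. 2 * exp (- 2 * real t powr \<eta>) + \<kappa> * real t powr (\<xi> * (\<eta> - 1) / 2)) \<in> o(\<lambda>t. real t powr d)"
      by (rule sum_in_smallo(1)[OF aux_o2[OF eta(1)] aux_o[OF g \<kappa>]])
    moreover have "F \<in> O(\<lambda>t. 2 * exp (- 2 * real t powr \<eta>) + \<kappa> * real t powr (\<xi> * (\<eta> - 1) / 2))"
    proof (rule bigoI[where c=1])
      show "eventually (\<lambda>t. norm (F t) \<le> 1 * norm (2 * exp (- 2 * real t powr \<eta>) + \<kappa> * real t powr (\<xi> * (\<eta> - 1) / 2))) sequentially"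
        using main[OF eta] 
      proof eventually_elim
        case (elim t)
        have "0 \<le> F t" unfolding F_def by (rule nonneg_int)
        then show ?case using elim by simp
      qed
    qed
    ultimately show "F \<in> o(\<lambda>t. real t powr d)" using landau_o.big_small_trans by blast
  qed
  show ?thesis using part1 part2 unfolding F_def by simp
qed


end
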